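(* Let $L_1>0$, $L_4\in\mathbb{R}$ and $\kappa_2\ge\frac{L_4^2}{2L_1}$, and let $\mathcal{L}_{h,\kappa_2}Q_h=L_1\Delta_hQ_h-\frac{L_4}{2}\mathcal{C}_hQ_h-\kappa_2Q_h$ on $\mathcal{M}_h$. Then for every $Q_h\in\mathcal{M}_h$, $$\langle\mathcal{L}_{h,\kappa_2}Q_h,Q_h\rangle_h\le0,$$ and $\mathcal{L}_{h,\kappa_2}$ generates a contraction semigroup in the discrete $L^2$ norm: $\|e^{t\mathcal{L}_{h,\kappa_2}}Q_h\|_2\le\|Q_h\|_2$ for all $t\ge0$ and $Q_h\in\mathcal{M}_h$.
   Context: Let $\Omega=(-X,X)\times(-Y,Y)\times(-Z,Z)$, $N_x,N_y,N_z$ positive even integers, $h_x=2X/N_x$, $h_y=2Y/N_y$, $h_z=2Z/N_z$, grid $S_h=\{(-X+ih_x,-Y+jh_y,-Z+kh_z):1\le i\le N_x,1\le j\le N_y,1\le k\le N_z\}$, and wavevector set $\hat S_h=\{(\pi n_1/X,\pi n_2/Y,\pi n_3/Z):-N_x/2+1\le n_1\le N_x/2,\ -N_y/2+1\le n_2\le N_y/2,\ -N_z/2+1\le n_3\le N_z/2\}$. $\mathcal{M}_h$ is the set of periodic grid functions $S_h\to\mathbb{R}^{3\times3}$, with discrete inner product $\langle M,N\rangle_h=h_xh_yh_z\sum_{x\in S_h}M(x):N(x)$ and norm $\|M\|_2=\langle M,M\rangle_h^{1/2}$. The discrete Fourier transform is $\widehat Q_{\boldsymbol k}=\sum_{x\in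 S_h}Q_h(x)e^{-i\boldsymbol k\cdot x}$, $\boldsymbol k\in\hat S_h$. The discrete Laplacian $\Delta_h$ has Fourier symbol $-|\boldsymbol k|^2$. The discrete curl $\nabla_h\times$ acts row-wise with symbol $\widehat{(\nabla_h\times Q_h)}_{\boldsymbol k}=i\boldsymbol k\times_r\widehat Q_{\boldsymbol k}$ (the $r$-th row is $i\boldsymbol k\times$ (the $r$-th row of $\widehat Q_{\boldsymbol k}$)), and $\mathcal{C}_hQ_h=\nabla_h\times Q_h+(\nabla_h\times Q_h)^T$. *)

theory Defs
  imports "HOL-Analysis.Analysis"
begin

text \<open>Grid functions are maps from index triples (i,j,k), 1 <= i <= Nx etc., to real 3x3 matrices;
  by convention they vanish off the index set (the periodic extension is implicit in the DFT).\<close>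

type_synonym gridfun = "nat \<times> nat \<times> nat \<Rightarrow> real^3^3"

definition grid_idx :: "nat \<Rightarrow> nat \<Rightarrow> nat \<Rightarrow> (nat \<times> nat \<times> nat) set" where
  "grid_idx Nx Ny Nz = {1..Nx} \<times> {1..Ny} \<times> {1..Nz}"

definition grid_pt :: "real \<Rightarrow> real \<Rightarrow> real \<Rightarrow> nat \<Rightarrow> nat \<Rightarrow> nat \<Rightarrow> nat \<times> nat \<times> nat \<Rightarrow> real^3" where
  "grid_pt X Y Z Nx Ny Nz p = (case p of (i, j, k) \<Rightarrow>
      vector [-X + real i * (2 * X / real Nx), -Y + real j * (2 * Y / real Ny), -Z + real k * (2 * Z / real Nz)])"

definition wave_idx :: "nat \<Rightarrow> nat \<Rightarrow> nat \<Rightarrow> (int \<times> int \<times> int) set" where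
  "wave_idx Nx Ny Nz = {- int Nx div 2 + 1 .. int Nx div 2} \<times> {- int Ny div 2 + 1 .. int Ny div 2}
                        \<times> {- int Nz div 2 + 1 .. int Nz div 2}"

definition wave_vec :: "real \<Rightarrow> real \<Rightarrow> real \<Rightarrow> int \<times> int \<times> int \<Rightarrow> real^3" where
  "wave_vec X Y Z n = (case n of (n1, n2, n3) \<Rightarrow>
      vector [pi * real_of_int n1 / X, pi * real_of_int n2 / Y, pi * real_of_int n3 / Z])"

definition Mh :: "nat \<Rightarrow> nat \<Rightarrow> nat \<Rightarrow> gridfun set" where
  "Mh Nx Ny Nz = {Q. \<forall>p. p \<notin> grid_idx Nx Ny Nz \<longrightarrow> Q p = 0}"

definition dft :: "real \<Rightarrow> real \<Rightarrow> real \<Rightarrow> nat \<Rightarrow> nat \<Rightarrow> nat \<Rightarrow> gridfun \<Rightarrow> int \<times> int \<times> int \<Rightarrow> complex^3^3" where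
  "dft X Y Z Nx Ny Nz Q n = (\<chi> r c. \<Sum>p\<in>grid_idx Nx Ny Nz.
      complex_of_real (Q p $ r $ c) * cis (- (wave_vec X Y Z n \<bullet> grid_pt X Y Z Nx Ny Nz p)))"

text \<open>Spectral operator with Fourier symbol \<open>\<sigma>\<close> (acting on the Fourier coefficient at wavevector k),
  realised through the inverse DFT; the real part is taken so that the result is a real grid function.\<close>
definition spec_op :: "real \<Rightarrow> real \<Rightarrow> real \<Rightarrow> nat \<Rightarrow> nat \<Rightarrow> nat \<Rightarrow>
    (real^3 \<Rightarrow> complex^3^3 \<Rightarrow> complex^3^3) \<Rightarrow> gridfun \<Rightarrow> gridfun" where
  "spec_op X Y Z Nx Ny Nz \<sigma> Q = (\<lambda>p. if p \<in> grid_idx Nx Ny Nz then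
      (\<chi> r c. Re ((1 / of_nat (Nx * Ny * Nz)) * (\<Sum>n\<in>wave_idx Nx Ny Nz.
         (\<sigma> (wave_vec X Y Z n) (dft X Y Z Nx Ny Nz Q n)) $ r $ c
           * cis (wave_vec X Y Z n \<bullet> grid_pt X Y Z Nx Ny Nz p))))
    else 0)"

definition lap_sym :: "real^3 \<Rightarrow> complex^3^3 \<Rightarrow> complex^3^3" where
  "lap_sym k A = (\<chi> r c. - complex_of_real ((norm k)\<^sup>2) * A $ r $ c)"

definition cross_c :: "complex^3 \<Rightarrow> complex^3 \<Rightarrow> complex^3" where
  "cross_c a b = vector [a$2 * b$3 - a$3 * b$2, a$3 * b$1 - a$1 * b$3, a$1 * b$2 - a$2 * b$1]"

definition curl_sym :: "real^3 \<Rightarrow> complex^3^3 \<Rightarrow> complex^3^3" where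
  "curl_sym k A = (\<chi> r. (\<chi> c. \<i> * cross_c (\<chi> l. complex_of_real (k $ l)) (A $ r) $ c))"

definition lap_h :: "real \<Rightarrow> real \<Rightarrow> real \<Rightarrow> nat \<Rightarrow> nat \<Rightarrow> nat \<Rightarrow> gridfun \<Rightarrow> gridfun" where
  "lap_h X Y Z Nx Ny Nz = spec_op X Y Z Nx Ny Nz lap_sym"

definition curl_h :: "real \<Rightarrow> real \<Rightarrow> real \<Rightarrow> nat \<Rightarrow> nat \<Rightarrow> nat \<Rightarrow> gridfun \<Rightarrow> gridfun" where
  "curl_h X Y Z Nx Ny Nz = spec_op X Y Z Nx Ny Nz curl_sym"

definition C_h :: "real \<Rightarrow> real \<Rightarrow> real \<Rightarrow> nat \<Rightarrow> nat \<Rightarrow> nat \<Rightarrow> gridfun \<Rightarrow> gridfun" where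
  "C_h X Y Z Nx Ny Nz Q = (\<lambda>p. curl_h X Y Z Nx Ny Nz Q p + transpose (curl_h X Y Z Nx Ny Nz Q p))"

definition L_h :: "real \<Rightarrow> real \<Rightarrow> real \<Rightarrow> nat \<Rightarrow> nat \<Rightarrow> nat \<Rightarrow> real \<Rightarrow> real \<Rightarrow> real \<Rightarrow> gridfun \<Rightarrow> gridfun" where
  "L_h X Y Z Nx Ny Nz L1 L4 \<kappa>2 Q = (\<lambda>p. L1 *\<^sub>R lap_h X Y Z Nx Ny Nz Q p
      - (L4 / 2) *\<^sub>R C_h X Y Z Nx Ny Nz Q p - \<kappa>2 *\<^sub>R Q p)"

definition frob :: "real^3^3 \<Rightarrow> real^3^3 \<Rightarrow> real" where
  "frob A B = (\<Sum>r\<in>UNIV. \<Sum>c\<in>UNIV. A $ r $ c * B $ r $ c)"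

definition inner_h :: "real \<Rightarrow> real \<Rightarrow> real \<Rightarrow> nat \<Rightarrow> nat \<Rightarrow> nat \<Rightarrow> gridfun \<Rightarrow> gridfun \<Rightarrow> real" where
  "inner_h X Y Z Nx Ny Nz M N = (2 * X / real Nx) * (2 * Y / real Ny) * (2 * Z / real Nz)
      * (\<Sum>p\<in>grid_idx Nx Ny Nz. frob (M p) (N p))"

definition norm_h :: "real \<Rightarrow> real \<Rightarrow> real \<Rightarrow> nat \<Rightarrow> nat \<Rightarrow> nat \<Rightarrow> gridfun \<Rightarrow> real" where
  "norm_h X Y Z Nx Ny Nz M = sqrt (inner_h X Y Z Nx Ny Nz M M)"

text \<open>Operator exponential \<open>e^{tL}\<close> of a linear operator on the finite-dimensional space of grid
  functions, via its power series (convergence in finite dimensions is pointwise).\<close>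
definition op_exp :: "(gridfun \<Rightarrow> gridfun) \<Rightarrow> real \<Rightarrow> gridfun \<Rightarrow> gridfun" where
  "op_exp L t Q = (\<lambda>p. \<Sum>n. (t ^ n / fact n) *\<^sub>R ((L ^^ n) Q p))"

end

theory Submission
  imports Defs
begin


lemma norm3_sq: "(norm (k::real^3))\<^sup>2 = (k$1)\<^sup>2 + (k$2)\<^sup>2 + (k$3)\<^sup>2"
  unfolding power2_norm_eq_inner by (simp add: inner_vec_def sum_3 power2_eq_square)

lemma cross_bound:
  fixes k :: "real^3" and a :: "complex^3"
  shows "(\<Sum>c\<in>UNIV. (cmod (cross_c (\<chi> l. complex_of_real (k $ l)) a $ c))\<^sup>2)
         \<le> (norm k)\<^sup>2 * (\<Sum>c\<in>UNIV. (cmod (a $ c))\<^sup>2)"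
proof -
  define u1 where "u1 = Re (a$1)" define u2 where "u2 = Re (a$2)" define u3 where "u3 = Re (a$3)"
  define w1 where "w1 = Im (a$1)" define w2 where "w2 = Im (a$2)" define w3 where "w3 = Im (a$3)"
  define k1 where "k1 = k$1" define k2 where "k2 = k$2" define k3 where "k3 = k$3"
  have L: "(\<Sum>c\<in>UNIV. (cmod (cross_c (\<chi> l. complex_of_real (k $ l)) a $ c))\<^sup>2)
     = (k2*u3 - k3*u2)\<^sup>2 + (k2*w3 - k3*w2)\<^sup>2 + (k3*u1 - k1*u3)\<^sup>2 + (k3*w1 - k1*w3)\<^sup>2
       + (k1*u2 - k2*u1)\<^sup>2 + (k1*w2 - k2*w1)\<^sup>2"
    by (simp add: sum_3 cross_c_def cmod_power2 u1_def u2_def u3_def w1_def w2_def w3_def k1_def k2_def k3_def)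
  have R: "(norm k)\<^sup>2 * (\<Sum>c\<in>UNIV. (cmod (a $ c))\<^sup>2) = (k1\<^sup>2+k2\<^sup>2+k3\<^sup>2) * (u1\<^sup>2+w1\<^sup>2+u2\<^sup>2+w2\<^sup>2+u3\<^sup>2+w3\<^sup>2)"
    by (simp add: norm3_sq sum_3 cmod_power2 u1_def u2_def u3_def w1_def w2_def w3_def k1_def k2_def k3_def algebra_simps)
  have E: "(k1\<^sup>2+k2\<^sup>2+k3\<^sup>2) * (u1\<^sup>2+w1\<^sup>2+u2\<^sup>2+w2\<^sup>2+u3\<^sup>2+w3\<^sup>2) - ((k2*u3 - k3*u2)\<^sup>2 + (k2*w3 - k3*w2)\<^sup>2 + (k3*u1 - k1*u3)\<^sup>2 + (k3*w1 - k1*w3)\<^sup>2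
       + (k1*u2 - k2*u1)\<^sup>2 + (k1*w2 - k2*w1)\<^sup>2) = (k1*u1+k2*u2+k3*u3)\<^sup>2 + (k1*w1+k2*w2+k3*w3)\<^sup>2"
    by (simp add: power2_eq_square algebra_simps)
  have "0 \<le> (k1*u1+k2*u2+k3*u3)\<^sup>2 + (k1*w1+k2*w2+k3*w3)\<^sup>2" by simp
  then show ?thesis using L R E by linarith
qed

lemma entry_bound:
  fixes b d :: complex and L1 L4 :: real
  assumes "L1 > 0"
  shows "\<bar>L4\<bar> * \<bar>Re (b * cnj d)\<bar> \<le> L1 * (cmod b)\<^sup>2 + L4\<^sup>2 / (4 * L1) * (cmod d)\<^sup>2"
proof -
  have "\<bar>Re (b * cnj d)\<bar> \<le> cmod b * cmod d"
    by (metis abs_Re_le_cmod complex_mod_cnj norm_mult)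
  hence 1: "\<bar>L4\<bar> * \<bar>Re (b * cnj d)\<bar> \<le> \<bar>L4\<bar> * (cmod b * cmod d)"
    by (simp add: mult_left_mono)
  have "0 \<le> (2 * L1 * cmod b - \<bar>L4\<bar> * cmod d)\<^sup>2" by simp
  hence "4 * L1 * (\<bar>L4\<bar> * (cmod b * cmod d)) \<le> 4 * L1 * (L1 * (cmod b)\<^sup>2) + L4\<^sup>2 * (cmod d)\<^sup>2"
    by (simp add: power2_eq_square algebra_simps)
  hence "\<bar>L4\<bar> * (cmod b * cmod d) \<le> L1 * (cmod b)\<^sup>2 + L4\<^sup>2 / (4 * L1) * (cmod d)\<^sup>2"
    using assms by (simp add: field_simps)
  with 1 show ?thesis by linarith
qed

lemma re_sum_bound:
  fixes B D :: "complex^3^3" and L1 L4 :: real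
  assumes "L1 > 0"
  shows "\<bar>L4\<bar> * \<bar>Re (\<Sum>r\<in>UNIV. \<Sum>c\<in>UNIV. B$r$c * cnj (D$r$c))\<bar>
     \<le> L1 * (\<Sum>r\<in>UNIV. \<Sum>c\<in>UNIV. (cmod (B$r$c))\<^sup>2) + L4\<^sup>2 / (4 * L1) * (\<Sum>r\<in>UNIV. \<Sum>c\<in>UNIV. (cmod (D$r$c))\<^sup>2)"
proof -
  have "\<bar>L4\<bar> * \<bar>Re (\<Sum>r\<in>UNIV. \<Sum>c\<in>UNIV. B$r$c * cnj (D$r$c))\<bar>
      = \<bar>L4\<bar> * \<bar>\<Sum>r\<in>UNIV. \<Sum>c\<in>UNIV. Re (B$r$c * cnj (D$r$c))\<bar>" by (simp add: Re_sum)
  also have "\<dots> \<le> \<bar>L4\<bar> * (\<Sum>r\<in>UNIV. \<Sum>c\<in>UNIV. \<bar>Re (B$r$c * cnj (D$r$c))\<bar>)"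
    by (intro mult_left_mono order_trans[OF sum_abs] sum_mono) auto
  also have "\<dots> = (\<Sum>r\<in>UNIV. \<Sum>c\<in>UNIV. \<bar>L4\<bar> * \<bar>Re (B$r$c * cnj (D$r$c))\<bar>)"
    by (simp add: sum_distrib_left)
  also have "\<dots> \<le> (\<Sum>r\<in>UNIV. \<Sum>c\<in>UNIV. L1 * (cmod (B$r$c))\<^sup>2 + L4\<^sup>2 / (4 * L1) * (cmod (D$r$c))\<^sup>2)"
    by (intro sum_mono entry_bound assms)
  also have "\<dots> = L1 * (\<Sum>r\<in>UNIV. \<Sum>c\<in>UNIV. (cmod (B$r$c))\<^sup>2) + L4\<^sup>2 / (4 * L1) * (\<Sum>r\<in>UNIV. \<Sum>c\<in>UNIV. (cmod (D$r$c))\<^sup>2)"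
    by (simp add: sum.distrib sum_distrib_left)
  finally show ?thesis .
qed

lemma curl_nsq:
  "(\<Sum>r\<in>UNIV. \<Sum>c\<in>UNIV. (cmod (curl_sym k A $r$c))\<^sup>2) \<le> (norm k)\<^sup>2 * (\<Sum>r\<in>UNIV. \<Sum>c\<in>UNIV. (cmod (A$r$c))\<^sup>2)"
proof -
  have "(\<Sum>r\<in>UNIV. \<Sum>c\<in>UNIV. (cmod (curl_sym k A $r$c))\<^sup>2)
      = (\<Sum>r\<in>UNIV. \<Sum>c\<in>UNIV. (cmod (cross_c (\<chi> l. complex_of_real (k $ l)) (A$r) $ c))\<^sup>2)"
    by (simp add: curl_sym_def norm_mult)
  also have "\<dots> \<le> (\<Sum>r\<in>UNIV. (norm k)\<^sup>2 * (\<Sum>c\<in>UNIV. (cmod (A$r$c))\<^sup>2))"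
    by (intro sum_mono cross_bound)
  finally show ?thesis by (simp add: sum_distrib_left)
qed

lemma symbol_bound:
  fixes L1 L4 \<kappa>2 :: real and k :: "real^3" and A :: "complex^3^3"
  assumes "L1 > 0" "\<kappa>2 \<ge> L4\<^sup>2 / (2 * L1)"
  shows "L1 * Re (\<Sum>r\<in>UNIV. \<Sum>c\<in>UNIV. lap_sym k A $r$c * cnj (A$r$c))
     - L4 / 2 * (Re (\<Sum>r\<in>UNIV. \<Sum>c\<in>UNIV. curl_sym k A $r$c * cnj (A$r$c))
                 + Re (\<Sum>r\<in>UNIV. \<Sum>c\<in>UNIV. curl_sym k A $r$c * cnj (A$c$r)))
     - \<kappa>2 * (\<Sum>r\<in>UNIV. \<Sum>c\<in>UNIV. (cmod (A$r$c))\<^sup>2) \<le> 0"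
proof -
  define NA where "NA = (\<Sum>r\<in>UNIV. \<Sum>c\<in>UNIV. (cmod (A$r$c))\<^sup>2)"
  define NB where "NB = (\<Sum>r\<in>UNIV. \<Sum>c\<in>UNIV. (cmod (curl_sym k A $r$c))\<^sup>2)"
  define T1 where "T1 = Re (\<Sum>r\<in>UNIV. \<Sum>c\<in>UNIV. curl_sym k A $r$c * cnj (A$r$c))"
  define T2 where "T2 = Re (\<Sum>r\<in>UNIV. \<Sum>c\<in>UNIV. curl_sym k A $r$c * cnj (A$c$r))"
  have NA0: "NA \<ge> 0" unfolding NA_def by (intro sum_nonneg) auto
  have lap: "Re (\<Sum>r\<in>UNIV. \<Sum>c\<in>UNIV. lap_sym k A $r$c * cnj (A$r$c)) = - (norm k)\<^sup>2 * NA"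
  proof -
    have "\<And>r c. Re (lap_sym k A $r$c * cnj (A$r$c)) = - (norm k)\<^sup>2 * (cmod (A$r$c))\<^sup>2"
    proof -
      fix r c
      have "lap_sym k A $r$c * cnj (A$r$c) = - complex_of_real ((norm k)\<^sup>2) * (A$r$c * cnj (A$r$c))"
        by (simp add: lap_sym_def)
      also have "\<dots> = - complex_of_real ((norm k)\<^sup>2) * complex_of_real ((cmod (A$r$c))\<^sup>2)"
        by (simp only: complex_norm_square)
      also have "\<dots> = complex_of_real (- (norm k)\<^sup>2 * (cmod (A$r$c))\<^sup>2)"
        by (simp only: of_real_mult of_real_minus)
      finally show "Re (lap_sym k A $r$c * cnj (A$r$c)) = - (norm k)\<^sup>2 * (cmod (A$r$c))\<^sup>2"
        by (simp only: Re_complex_of_real)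
    qed
    then show ?thesis by (simp add: Re_sum NA_def sum_distrib_left)
  qed
  have NB: "NB \<le> (norm k)\<^sup>2 * NA" unfolding NB_def NA_def by (rule curl_nsq)
  have t1: "\<bar>L4\<bar> * \<bar>T1\<bar> \<le> L1 * NB + L4\<^sup>2 / (4 * L1) * NA"
    unfolding T1_def NB_def NA_def by (rule re_sum_bound[OF assms(1)])
  have t2': "\<bar>L4\<bar> * \<bar>T2\<bar> \<le> L1 * NB + L4\<^sup>2 / (4 * L1) * (\<Sum>r\<in>UNIV. \<Sum>c\<in>UNIV. (cmod (transpose A $r$c))\<^sup>2)"
    unfolding T2_def NB_def using re_sum_bound[OF assms(1), of L4 "curl_sym k A" "transpose A"]
    by (simp add: transpose_def)
  have "(\<Sum>r\<in>UNIV. \<Sum>c\<in>UNIV. (cmod (transpose A $r$c))\<^sup>2) = NA"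
    unfolding NA_def transpose_def by (simp add: sum.swap[of "\<lambda>r c. (cmod (A$c$r))\<^sup>2"])
  with t2' have t2: "\<bar>L4\<bar> * \<bar>T2\<bar> \<le> L1 * NB + L4\<^sup>2 / (4 * L1) * NA" by simp
  have c: "L4\<^sup>2 / (4 * L1) = (L4\<^sup>2 / (2 * L1)) / 2" by simp
  have "L4\<^sup>2 / (2 * L1) \<ge> 0" using assms(1) by simp
  hence k0: "\<kappa>2 \<ge> 0" using assms(2) by linarith
  have a1: "-(L4*T1) \<le> \<bar>L4\<bar> * \<bar>T1\<bar>" by (metis abs_ge_minus_self abs_mult)
  have a2: "-(L4*T2) \<le> \<bar>L4\<bar> * \<bar>T2\<bar>" by (metis abs_ge_minus_self abs_mult)
  have a3: "- L4 / 2 * (T1 + T2) = (-(L4*T1))/2 + (-(L4*T2))/2" by (simp add: algebra_simps)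
  have "- L4 / 2 * (T1 + T2) \<le> \<bar>L4\<bar> * \<bar>T1\<bar> / 2 + \<bar>L4\<bar> * \<bar>T2\<bar> / 2"
    unfolding a3 using a1 a2 by linarith
  also have "\<dots> \<le> L1 * NB + L4\<^sup>2 / (4 * L1) * NA" using t1 t2 by linarith
  also have "\<dots> \<le> L1 * ((norm k)\<^sup>2 * NA) + \<kappa>2 / 2 * NA"
    using NB NA0 assms c by (intro add_mono mult_left_mono mult_right_mono) auto
  finally have "- L4 / 2 * (T1 + T2) \<le> L1 * ((norm k)\<^sup>2 * NA) + \<kappa>2 / 2 * NA" .
  moreover have "\<kappa>2 * NA \<ge> 0" using k0 NA0 by simp
  moreover have "L1 * (-(norm k)\<^sup>2 * NA) = -(L1*((norm k)\<^sup>2*NA))" by simp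
  moreover have "\<kappa>2/2*NA = (\<kappa>2*NA)/2" by simp
  ultimately have "L1 * (-(norm k)\<^sup>2 * NA) - L4 / 2 * (T1 + T2) - \<kappa>2 * NA \<le> 0" by linarith
  then show ?thesis by (simp only: lap T1_def T2_def NA_def)
qed



lemma cis_eq_1_int:
  assumes "cis (2 * pi * (of_int d / real N)) = 1" "N > 0" "\<bar>d\<bar> < int N"
  shows "d = 0"
proof -
  from assms(1) have "exp (\<i> * complex_of_real (2 * pi * (of_int d / real N))) = 1"
    by (simp add: cis_conv_exp)
  then obtain m :: int where m: "2 * pi * (of_int d / real N) = of_int (2 * m) * pi"
    by (auto simp: exp_eq_1)
  have e1: "pi * (of_int d / real N) = (2 * pi * (of_int d / real N)) / 2" by simp
  have e2: "pi * of_int m = (of_int (2 * m) * pi) / 2" by simp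
  have "pi * (of_int d / real N) = pi * of_int m" unfolding e1 e2 m ..
  hence "of_int d / real N = of_int m" by (rule mult_left_cancel[THEN iffD1, OF pi_neq_zero])
  hence "of_int d = of_int m * real N" using assms(2) by (simp add: field_simps)
  hence dm: "d = m * int N" by (metis of_int_eq_iff of_int_mult of_int_of_nat_eq)
  show ?thesis
  proof (rule ccontr)
    assume "d \<noteq> 0"
    hence "m \<noteq> 0" using dm by simp
    hence "1 \<le> \<bar>m\<bar>" by arith
    hence "\<bar>m * int N\<bar> \<ge> int N" using mult_right_mono[of 1 "\<bar>m\<bar>" "int N"] by (simp add: abs_mult)
    thus False using assms(3) dm by simp
  qed
qed

lemma orth1:
  fixes N :: nat and d :: int
  assumes N: "N > 0" "even N" and d: "\<bar>d\<bar> < int N"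
  shows "(\<Sum>n\<in>{- int N div 2 + 1 .. int N div 2}. cis (2 * pi * of_int n * of_int d / real N))
         = (if d = 0 then of_nat N else 0)"
proof -
  define a where "a = - int N div 2 + 1"
  have ee: "int N div 2 = a + int N - 1" using N unfolding a_def by (auto elim: evenE)
  have S: "{- int N div 2 + 1 .. int N div 2} = (\<lambda>m. a + int m) ` {..<N}"
  proof -
    have "{a .. a + int N - 1} = (\<lambda>m. a + int m) ` {..<N}"
    proof (rule set_eqI, rule iffI)
      fix x assume "x \<in> {a .. a + int N - 1}"
      hence "x = a + int (nat (x - a))" "nat (x - a) < N" by auto
      thus "x \<in> (\<lambda>m. a + int m) ` {..<N}" by blast
    qed auto
    thus ?thesis using ee a_def by simp
  qed
  have inj: "inj_on (\<lambda>m. a + int m) {..<N}" by (auto simp: inj_on_def)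
  define \<theta> where "\<theta> = 2 * pi * (of_int d / real N)"
  have tm: "cis (2 * pi * of_int (a + int m) * of_int d / real N) = cis (of_int a * \<theta>) * (cis \<theta>) ^ m" for m
  proof -
    have "2 * pi * of_int (a + int m) * of_int d / real N = of_int a * \<theta> + real m * \<theta>"
      using N by (simp add: \<theta>_def field_simps)
    hence "cis (2 * pi * of_int (a + int m) * of_int d / real N) = cis (of_int a * \<theta> + real m * \<theta>)" by simp
    also have "\<dots> = cis (of_int a * \<theta>) * (cis \<theta>) ^ m" unfolding Complex.DeMoivre cis_mult ..
    finally show ?thesis .
  qed
  have "(\<Sum>n\<in>{- int N div 2 + 1 .. int N div 2}. cis (2 * pi * of_int n * of_int d / real N))
      = (\<Sum>m<N. cis (2 * pi * of_int (a + int m) * of_int d / real N))"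
    unfolding S by (simp add: sum.reindex[OF inj])
  also have "\<dots> = cis (of_int a * \<theta>) * (\<Sum>m<N. (cis \<theta>) ^ m)"
    by (simp only: tm sum_distrib_left)
  also have "\<dots> = (if d = 0 then of_nat N else 0)"
  proof (cases "d = 0")
    case True thus ?thesis by (simp add: \<theta>_def)
  next
    case False
    hence ne: "cis \<theta> \<noteq> 1" using cis_eq_1_int[of d N] N d unfolding \<theta>_def by auto
    have "(cis \<theta>) ^ N = 1"
    proof -
      have "(cis \<theta>) ^ N = cis (2 * pi * of_int d)" using N by (simp add: Complex.DeMoivre \<theta>_def)
      also have "\<dots> = 1" by (simp add: Ints_of_int)
      finally show ?thesis .
    qed
    thus ?thesis using ne False by (simp add: sum_gp_strict)
  qed
  finally show ?thesis .
qed

lemma phase_diff: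
  assumes "X > 0" "Y > 0" "Z > 0" "Nx > 0" "Ny > 0" "Nz > 0"
  shows "wave_vec X Y Z (n1,n2,n3) \<bullet> grid_pt X Y Z Nx Ny Nz (i,j,k)
       - wave_vec X Y Z (n1,n2,n3) \<bullet> grid_pt X Y Z Nx Ny Nz (i',j',k')
     = 2 * pi * of_int n1 * of_int (int i - int i') / real Nx
     + 2 * pi * of_int n2 * of_int (int j - int j') / real Ny
     + 2 * pi * of_int n3 * of_int (int k - int k') / real Nz"
  using assms by (simp add: wave_vec_def grid_pt_def inner_vec_def sum_3 field_simps)

lemma sum_triple:
  fixes f g h :: "int \<Rightarrow> complex"
  shows "(\<Sum>n\<in>A \<times> B \<times> C. f (fst n) * g (fst (snd n)) * h (snd (snd n)))
     = (\<Sum>a\<in>A. f a) * (\<Sum>b\<in>B. g b) * (\<Sum>c\<in>C. h c)"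
proof -
  have "(\<Sum>n\<in>A \<times> B \<times> C. f (fst n) * g (fst (snd n)) * h (snd (snd n)))
      = (\<Sum>a\<in>A. \<Sum>b\<in>B. \<Sum>c\<in>C. f a * g b * h c)"
    by (simp add: sum.cartesian_product split_def)
  also have "\<dots> = (\<Sum>a\<in>A. \<Sum>b\<in>B. f a * (\<Sum>c\<in>C. g b * h c))"
    by (simp only: sum_distrib_left mult.assoc)
  also have "\<dots> = (\<Sum>a\<in>A. f a) * (\<Sum>b\<in>B. \<Sum>c\<in>C. g b * h c)"
    by (rule sum_product[symmetric])
  also have "(\<Sum>b\<in>B. \<Sum>c\<in>C. g b * h c) = (\<Sum>b\<in>B. g b) * (\<Sum>c\<in>C. h c)"
    by (rule sum_product[symmetric])
  finally show ?thesis by (simp only: mult.assoc)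
qed

lemma orth3:
  assumes pos: "X > 0" "Y > 0" "Z > 0" "Nx > 0" "Ny > 0" "Nz > 0"
    and ev: "even Nx" "even Ny" "even Nz"
    and p: "p \<in> grid_idx Nx Ny Nz" and q: "q \<in> grid_idx Nx Ny Nz"
  shows "(\<Sum>n\<in>wave_idx Nx Ny Nz. cis (wave_vec X Y Z n \<bullet> grid_pt X Y Z Nx Ny Nz p
                                   - wave_vec X Y Z n \<bullet> grid_pt X Y Z Nx Ny Nz q))
         = (if p = q then of_nat (Nx * Ny * Nz) else 0)"
proof -
  obtain i j k where pe: "p = (i,j,k)" by (cases p) auto
  obtain i' j' k' where qe: "q = (i',j',k')" by (cases q) auto
  have b: "1 \<le> i" "i \<le> Nx" "1 \<le> j" "j \<le> Ny" "1 \<le> k" "k \<le> Nz"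
          "1 \<le> i'" "i' \<le> Nx" "1 \<le> j'" "j' \<le> Ny" "1 \<le> k'" "k' \<le> Nz"
    using p q pe qe by (auto simp: grid_idx_def)
  define f1 where "f1 = (\<lambda>n1::int. cis (2 * pi * of_int n1 * of_int (int i - int i') / real Nx))"
  define f2 where "f2 = (\<lambda>n2::int. cis (2 * pi * of_int n2 * of_int (int j - int j') / real Ny))"
  define f3 where "f3 = (\<lambda>n3::int. cis (2 * pi * of_int n3 * of_int (int k - int k') / real Nz))"
  have "\<And>n. n \<in> wave_idx Nx Ny Nz \<Longrightarrow> cis (wave_vec X Y Z n \<bullet> grid_pt X Y Z Nx Ny Nz p
                                   - wave_vec X Y Z n \<bullet> grid_pt X Y Z Nx Ny Nz q)
       = f1 (fst n) * f2 (fst (snd n)) * f3 (snd (snd n))"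
  proof -
    fix n :: "int \<times> int \<times> int"
    obtain n1 n2 n3 where ne: "n = (n1,n2,n3)" by (cases n) auto
    show "cis (wave_vec X Y Z n \<bullet> grid_pt X Y Z Nx Ny Nz p
                                   - wave_vec X Y Z n \<bullet> grid_pt X Y Z Nx Ny Nz q)
       = f1 (fst n) * f2 (fst (snd n)) * f3 (snd (snd n))"
      unfolding ne pe qe phase_diff[OF pos] f1_def f2_def f3_def by (simp add: cis_mult)
  qed
  hence "(\<Sum>n\<in>wave_idx Nx Ny Nz. cis (wave_vec X Y Z n \<bullet> grid_pt X Y Z Nx Ny Nz p
                                   - wave_vec X Y Z n \<bullet> grid_pt X Y Z Nx Ny Nz q))
     = (\<Sum>n\<in>wave_idx Nx Ny Nz. f1 (fst n) * f2 (fst (snd n)) * f3 (snd (snd n)))"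
    by (rule sum.cong[OF refl])
  also have "\<dots> = (\<Sum>a\<in>{- int Nx div 2 + 1 .. int Nx div 2}. f1 a) * (\<Sum>b\<in>{- int Ny div 2 + 1 .. int Ny div 2}. f2 b)
       * (\<Sum>c\<in>{- int Nz div 2 + 1 .. int Nz div 2}. f3 c)"
    unfolding wave_idx_def by (rule sum_triple)
  also have "\<dots> = (if int i - int i' = 0 then of_nat Nx else 0) * (if int j - int j' = 0 then of_nat Ny else 0)
       * (if int k - int k' = 0 then of_nat Nz else 0)"
  proof -
    have o1: "(\<Sum>a\<in>{- int Nx div 2 + 1 .. int Nx div 2}. f1 a) = (if int i - int i' = 0 then of_nat Nx else 0)"
      unfolding f1_def by (rule orth1) (use b pos ev in auto)
    have o2: "(\<Sum>a\<in>{- int Ny div 2 + 1 .. int Ny div 2}. f2 a) = (if int j - int j' = 0 then of_nat Ny else 0)"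
      unfolding f2_def by (rule orth1) (use b pos ev in auto)
    have o3: "(\<Sum>a\<in>{- int Nz div 2 + 1 .. int Nz div 2}. f3 a) = (if int k - int k' = 0 then of_nat Nz else 0)"
      unfolding f3_def by (rule orth1) (use b pos ev in auto)
    show ?thesis unfolding o1 o2 o3 ..
  qed
  also have "\<dots> = (if p = q then of_nat (Nx * Ny * Nz) else 0)"
    using pe qe by auto
  finally show ?thesis .
qed



lemma swap4:
  "(\<Sum>p\<in>P. \<Sum>r\<in>R. \<Sum>c\<in>Cc. \<Sum>n\<in>M. T p r c n) = (\<Sum>n\<in>M. \<Sum>r\<in>R. \<Sum>c\<in>Cc. \<Sum>p\<in>P. T p r c n)"
proof -
  have "(\<Sum>p\<in>P. \<Sum>r\<in>R. \<Sum>c\<in>Cc. \<Sum>n\<in>M. T p r c n) = (\<Sum>r\<in>R. \<Sum>p\<in>P. \<Sum>c\<in>Cc. \<Sum>n\<in>M. T p r c n)"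
    by (rule sum.swap)
  also have "\<dots> = (\<Sum>r\<in>R. \<Sum>c\<in>Cc. \<Sum>p\<in>P. \<Sum>n\<in>M. T p r c n)"
    by (rule sum.cong[OF refl], rule sum.swap)
  also have "\<dots> = (\<Sum>r\<in>R. \<Sum>c\<in>Cc. \<Sum>n\<in>M. \<Sum>p\<in>P. T p r c n)"
    by (rule sum.cong[OF refl], rule sum.cong[OF refl], rule sum.swap)
  also have "\<dots> = (\<Sum>r\<in>R. \<Sum>n\<in>M. \<Sum>c\<in>Cc. \<Sum>p\<in>P. T p r c n)"
    by (rule sum.cong[OF refl], rule sum.swap)
  also have "\<dots> = (\<Sum>n\<in>M. \<Sum>r\<in>R. \<Sum>c\<in>Cc. \<Sum>p\<in>P. T p r c n)"
    by (rule sum.swap)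
  finally show ?thesis .
qed

lemma cnj_dft:
  "cnj (dft X Y Z Nx Ny Nz w n $ r $ c) = (\<Sum>p\<in>grid_idx Nx Ny Nz.
      complex_of_real (w p $ r $ c) * cis (wave_vec X Y Z n \<bullet> grid_pt X Y Z Nx Ny Nz p))"
  by (simp add: dft_def cis_cnj)

lemma F1:
  fixes \<sigma> :: "real^3 \<Rightarrow> complex^3^3 \<Rightarrow> complex^3^3"
  shows "(\<Sum>p\<in>grid_idx Nx Ny Nz. frob (spec_op X Y Z Nx Ny Nz \<sigma> v p) (w p))
     = Re ((1 / of_nat (Nx * Ny * Nz)) * (\<Sum>n\<in>wave_idx Nx Ny Nz. \<Sum>r\<in>UNIV. \<Sum>c\<in>UNIV.
          \<sigma> (wave_vec X Y Z n) (dft X Y Z Nx Ny Nz v n) $ r $ c * cnj (dft X Y Z Nx Ny Nz w n $ r $ c)))"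
proof -
  define G where "G = grid_idx Nx Ny Nz"
  define W where "W = wave_idx Nx Ny Nz"
  define iN :: complex where "iN = 1 / of_nat (Nx * Ny * Nz)"
  define S where "S = (\<lambda>n r c. \<sigma> (wave_vec X Y Z n) (dft X Y Z Nx Ny Nz v n) $ r $ c)"
  define E where "E = (\<lambda>n p. cis (wave_vec X Y Z n \<bullet> grid_pt X Y Z Nx Ny Nz p))"
  define T where "T = (\<lambda>p r c n. Re (iN * S n r c * (complex_of_real (w p $ r $ c) * E n p)))"
  have L: "frob (spec_op X Y Z Nx Ny Nz \<sigma> v p) (w p) = (\<Sum>r\<in>UNIV. \<Sum>c\<in>UNIV. \<Sum>n\<in>W. T p r c n)"
    if "p \<in> G" for p
  proof -
    have "frob (spec_op X Y Z Nx Ny Nz \<sigma> v p) (w p)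
       = (\<Sum>r\<in>UNIV. \<Sum>c\<in>UNIV. Re (iN * (\<Sum>n\<in>W. S n r c * E n p)) * w p $ r $ c)"
      using that unfolding frob_def spec_op_def G_def W_def iN_def S_def E_def by simp
    also have "\<dots> = (\<Sum>r\<in>UNIV. \<Sum>c\<in>UNIV. \<Sum>n\<in>W. T p r c n)"
    proof (intro sum.cong refl)
      fix r c
      have "Re (iN * (\<Sum>n\<in>W. S n r c * E n p)) * w p $ r $ c
          = Re (iN * (\<Sum>n\<in>W. S n r c * E n p) * complex_of_real (w p $ r $ c))" by simp
      also have "iN * (\<Sum>n\<in>W. S n r c * E n p) * complex_of_real (w p $ r $ c)
          = (\<Sum>n\<in>W. iN * S n r c * (complex_of_real (w p $ r $ c) * E n p))"
        by (simp add: sum_distrib_left sum_distrib_right mult_ac)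
      finally show "Re (iN * (\<Sum>n\<in>W. S n r c * E n p)) * w p $ r $ c = (\<Sum>n\<in>W. T p r c n)"
        by (simp add: T_def Re_sum)
    qed
    finally show ?thesis .
  qed
  have "(\<Sum>p\<in>G. frob (spec_op X Y Z Nx Ny Nz \<sigma> v p) (w p)) = (\<Sum>p\<in>G. \<Sum>r\<in>UNIV. \<Sum>c\<in>UNIV. \<Sum>n\<in>W. T p r c n)"
    using L by (rule sum.cong[OF refl])
  also have "\<dots> = (\<Sum>n\<in>W. \<Sum>r\<in>UNIV. \<Sum>c\<in>UNIV. \<Sum>p\<in>G. T p r c n)" by (rule swap4)
  also have "\<dots> = Re (iN * (\<Sum>n\<in>W. \<Sum>r\<in>UNIV. \<Sum>c\<in>UNIV. S n r c * cnj (dft X Y Z Nx Ny Nz w n $ r $ c)))"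
  proof -
    have "iN * (\<Sum>n\<in>W. \<Sum>r\<in>UNIV. \<Sum>c\<in>UNIV. S n r c * cnj (dft X Y Z Nx Ny Nz w n $ r $ c))
       = (\<Sum>n\<in>W. \<Sum>r\<in>UNIV. \<Sum>c\<in>UNIV. \<Sum>p\<in>G. iN * S n r c * (complex_of_real (w p $ r $ c) * E n p))"
      unfolding cnj_dft G_def[symmetric]
      by (simp add: sum_distrib_left mult_ac E_def)
    thus ?thesis by (simp add: T_def Re_sum)
  qed
  finally show ?thesis unfolding G_def W_def iN_def S_def .
qed



lemma re_iN: "Re ((1 / of_nat M) * z) = Re z / real M"
proof -
  have "(1 / of_nat M :: complex) = complex_of_real (1 / real M)" by simp
  thus ?thesis by (cases "M = 0") (simp_all add: Re_divide power2_eq_square)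
qed

lemma inversion:
  assumes pos: "X > 0" "Y > 0" "Z > 0" "Nx > 0" "Ny > 0" "Nz > 0"
    and ev: "even Nx" "even Ny" "even Nz"
    and p: "p \<in> grid_idx Nx Ny Nz"
  shows "spec_op X Y Z Nx Ny Nz (\<lambda>k A. A) v p = v p"
proof -
  define G where "G = grid_idx Nx Ny Nz"
  define W where "W = wave_idx Nx Ny Nz"
  define M where "M = Nx * Ny * Nz"
  define E where "E = (\<lambda>n p. wave_vec X Y Z n \<bullet> grid_pt X Y Z Nx Ny Nz p)"
  have M0: "M > 0" using pos by (simp add: M_def)
  have fin: "finite G" unfolding G_def grid_idx_def by simp
  have "spec_op X Y Z Nx Ny Nz (\<lambda>k A. A) v p $ r $ c = v p $ r $ c" for r c
  proof -
    have "spec_op X Y Z Nx Ny Nz (\<lambda>k A. A) v p $ r $ c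
        = Re ((1 / of_nat M) * (\<Sum>n\<in>W. (\<Sum>q\<in>G. complex_of_real (v q $ r $ c) * cis (- E n q)) * cis (E n p)))"
      using p unfolding spec_op_def dft_def G_def W_def M_def E_def by simp
    also have "(\<Sum>n\<in>W. (\<Sum>q\<in>G. complex_of_real (v q $ r $ c) * cis (- E n q)) * cis (E n p))
        = (\<Sum>q\<in>G. complex_of_real (v q $ r $ c) * (\<Sum>n\<in>W. cis (E n p - E n q)))"
      by (simp add: sum_distrib_left sum_distrib_right cis_mult mult.assoc sum.swap[of _ W G] )
    also have "\<dots> = (\<Sum>q\<in>G. complex_of_real (v q $ r $ c) * (if p = q then of_nat M else 0))"
      unfolding E_def W_def M_def
      by (intro sum.cong refl, subst orth3[OF pos ev p]) (auto simp: G_def)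
    also have "\<dots> = complex_of_real (v p $ r $ c) * of_nat M"
    proof -
      have "(\<Sum>q\<in>G. complex_of_real (v q $ r $ c) * (if p = q then of_nat M else 0))
          = (\<Sum>q\<in>G. if p = q then complex_of_real (v q $ r $ c) * of_nat M else 0)"
        by (rule sum.cong) auto
      also have "\<dots> = complex_of_real (v p $ r $ c) * of_nat M"
        using p fin by (simp add: G_def)
      finally show ?thesis .
    qed
    finally show ?thesis using M0 by (simp add: re_iN)
  qed
  thus ?thesis by (simp add: vec_eq_iff)
qed

lemma frob_add: "frob (A + B) C = frob A C + frob B C"
  by (simp add: frob_def sum.distrib distrib_right)
lemma frob_diff: "frob (A - B) C = frob A C - frob B C"
  by (simp add: frob_def sum_subtractf left_diff_distrib)
lemma frob_scale: "frob (a *\<^sub>R A) C = a * frob A C"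
  by (simp add: frob_def sum_distrib_left mult.assoc)
lemma frob_transpose: "frob (transpose A) C = frob A (transpose C)"
  unfolding frob_def transpose_def by (simp add: sum.swap[of "\<lambda>r c. A $ c $ r * C $ r $ c"])

lemma re_cnj_sq: "Re (z * cnj z) = (cmod z)\<^sup>2"
  by (subst complex_norm_square[symmetric]) (rule Re_complex_of_real)

lemma dft_transpose:
  "dft X Y Z Nx Ny Nz (\<lambda>p. transpose (v p)) n $ r $ c = dft X Y Z Nx Ny Nz v n $ c $ r"
  by (simp add: dft_def transpose_def)

lemma F1':
  "(\<Sum>p\<in>grid_idx Nx Ny Nz. frob (spec_op X Y Z Nx Ny Nz \<sigma> v p) (w p))
     = (\<Sum>n\<in>wave_idx Nx Ny Nz. Re (\<Sum>r\<in>UNIV. \<Sum>c\<in>UNIV.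
          \<sigma> (wave_vec X Y Z n) (dft X Y Z Nx Ny Nz v n) $ r $ c * cnj (dft X Y Z Nx Ny Nz w n $ r $ c)))
       / real (Nx * Ny * Nz)"
  unfolding F1 re_iN by (simp add: Re_sum)

lemma sum_comb4:
  fixes a b d :: real
  shows "(\<Sum>p\<in>G. a * f p - b * (g p + h p) - d * q p) = a * sum f G - b * (sum g G + sum h G) - d * sum q G"
  by (simp add: sum.distrib sum_subtractf sum_distrib_left distrib_left)

lemma comb_div:
  fixes a b d M :: real
  shows "a * (sum A W / M) - b * (sum B W / M + sum C W / M) - d * (sum E W / M)
       = (\<Sum>n\<in>W. a * A n - b * (B n + C n) - d * E n) / M"
  by (simp add: sum.distrib sum_subtractf sum_distrib_left distrib_left diff_divide_distrib add_divide_distrib)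

lemma quad_nonpos:
  assumes pos: "X > 0" "Y > 0" "Z > 0" "Nx > 0" "Ny > 0" "Nz > 0"
    and ev: "even Nx" "even Ny" "even Nz"
    and L: "L1 > 0" "\<kappa>2 \<ge> L4\<^sup>2 / (2 * L1)"
  shows "(\<Sum>p\<in>grid_idx Nx Ny Nz. frob (L_h X Y Z Nx Ny Nz L1 L4 \<kappa>2 v p) (v p)) \<le> 0"
proof -
  define G where "G = grid_idx Nx Ny Nz"
  define W where "W = wave_idx Nx Ny Nz"
  define M where "M = Nx * Ny * Nz"
  define vt where "vt = (\<lambda>p. transpose (v p))"
  define sp where "sp = spec_op X Y Z Nx Ny Nz"
  define D where "D = dft X Y Z Nx Ny Nz v"
  define k where "k = wave_vec X Y Z"
  have pt: "frob (L_h X Y Z Nx Ny Nz L1 L4 \<kappa>2 v p) (v p)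
     = L1 * frob (sp lap_sym v p) (v p) - L4 / 2 * (frob (sp curl_sym v p) (v p) + frob (sp curl_sym v p) (vt p))
       - \<kappa>2 * frob (sp (\<lambda>k A. A) v p) (v p)" if "p \<in> G" for p
    using inversion[OF pos ev, of p v] that
    unfolding L_h_def C_h_def lap_h_def curl_h_def sp_def vt_def G_def
    by (simp add: frob_add frob_diff frob_scale frob_transpose)
  have "(\<Sum>p\<in>G. frob (L_h X Y Z Nx Ny Nz L1 L4 \<kappa>2 v p) (v p))
      = L1 * (\<Sum>p\<in>G. frob (sp lap_sym v p) (v p))
        - L4 / 2 * ((\<Sum>p\<in>G. frob (sp curl_sym v p) (v p)) + (\<Sum>p\<in>G. frob (sp curl_sym v p) (vt p)))
        - \<kappa>2 * (\<Sum>p\<in>G. frob (sp (\<lambda>k A. A) v p) (v p))"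
    by (simp only: sum.cong[OF refl pt] sum_comb4)
  also have "\<dots> = (\<Sum>n\<in>W. L1 * Re (\<Sum>r\<in>UNIV. \<Sum>c\<in>UNIV. lap_sym (k n) (D n) $r$c * cnj (D n $r$c))
     - L4 / 2 * (Re (\<Sum>r\<in>UNIV. \<Sum>c\<in>UNIV. curl_sym (k n) (D n) $r$c * cnj (D n $r$c))
                 + Re (\<Sum>r\<in>UNIV. \<Sum>c\<in>UNIV. curl_sym (k n) (D n) $r$c * cnj (D n $c$r)))
     - \<kappa>2 * (\<Sum>r\<in>UNIV. \<Sum>c\<in>UNIV. (cmod (D n $r$c))\<^sup>2)) / real M"
    unfolding sp_def G_def vt_def
    by (simp only: F1' dft_transpose D_def[symmetric] k_def[symmetric] W_def[symmetric] M_def[symmetric]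
         Re_sum re_cnj_sq comb_div)
  also have "\<dots> \<le> 0"
    by (intro divide_nonpos_nonneg sum_nonpos symbol_bound L) simp
  finally show ?thesis unfolding G_def .
qed



definition Kspec :: "real \<Rightarrow> real \<Rightarrow> real \<Rightarrow> nat \<Rightarrow> nat \<Rightarrow> nat \<Rightarrow>
    (real^3 \<Rightarrow> 3 \<Rightarrow> 3 \<Rightarrow> 3 \<Rightarrow> 3 \<Rightarrow> complex) \<Rightarrow> nat \<times> nat \<times> nat \<Rightarrow> 3 \<Rightarrow> 3 \<Rightarrow> nat \<times> nat \<times> nat \<Rightarrow> 3 \<Rightarrow> 3 \<Rightarrow> real" where
  "Kspec X Y Z Nx Ny Nz s p r c q r' c' = Re ((1 / of_nat (Nx * Ny * Nz)) * (\<Sum>n\<in>wave_idx Nx Ny Nz.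
      s (wave_vec X Y Z n) r c r' c' * cis (- (wave_vec X Y Z n \<bullet> grid_pt X Y Z Nx Ny Nz q))
        * cis (wave_vec X Y Z n \<bullet> grid_pt X Y Z Nx Ny Nz p)))"

lemma spec_kern:
  assumes s: "\<And>k A r c. \<sigma> k A $ r $ c = (\<Sum>r'\<in>UNIV. \<Sum>c'\<in>UNIV. s k r c r' c' * A $ r' $ c')"
    and p: "p \<in> grid_idx Nx Ny Nz"
  shows "spec_op X Y Z Nx Ny Nz \<sigma> v p $ r $ c = (\<Sum>q\<in>grid_idx Nx Ny Nz. \<Sum>r'\<in>UNIV. \<Sum>c'\<in>UNIV.
            Kspec X Y Z Nx Ny Nz s p r c q r' c' * v q $ r' $ c')"
proof -
  define G where "G = grid_idx Nx Ny Nz"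
  define W where "W = wave_idx Nx Ny Nz"
  define iN :: complex where "iN = 1 / of_nat (Nx * Ny * Nz)"
  define E where "E = (\<lambda>n p. wave_vec X Y Z n \<bullet> grid_pt X Y Z Nx Ny Nz p)"
  define T where "T = (\<lambda>q r' c' n. iN * s (wave_vec X Y Z n) r c r' c' * cis (- E n q) * cis (E n p)
                        * complex_of_real (v q $ r' $ c'))"
  have "spec_op X Y Z Nx Ny Nz \<sigma> v p $ r $ c
     = Re (iN * (\<Sum>n\<in>W. (\<Sum>r'\<in>UNIV. \<Sum>c'\<in>UNIV. s (wave_vec X Y Z n) r c r' c' *
          (\<Sum>q\<in>G. complex_of_real (v q $ r' $ c') * cis (- E n q))) * cis (E n p)))"
    using p unfolding spec_op_def G_def W_def iN_def E_def by (simp add: s dft_def)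
  also have "iN * (\<Sum>n\<in>W. (\<Sum>r'\<in>UNIV. \<Sum>c'\<in>UNIV. s (wave_vec X Y Z n) r c r' c' *
          (\<Sum>q\<in>G. complex_of_real (v q $ r' $ c') * cis (- E n q))) * cis (E n p))
      = (\<Sum>n\<in>W. \<Sum>r'\<in>UNIV. \<Sum>c'\<in>UNIV. \<Sum>q\<in>G. T q r' c' n)"
    unfolding T_def by (simp add: sum_distrib_left sum_distrib_right mult_ac)
  also have "\<dots> = (\<Sum>q\<in>G. \<Sum>r'\<in>UNIV. \<Sum>c'\<in>UNIV. \<Sum>n\<in>W. T q r' c' n)"
    by (rule swap4[symmetric])
  also have "Re \<dots> = (\<Sum>q\<in>G. \<Sum>r'\<in>UNIV. \<Sum>c'\<in>UNIV. Kspec X Y Z Nx Ny Nz s p r c q r' c' * v q $ r' $ c')"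
  proof -
    have "(\<Sum>n\<in>W. T q r' c' n) = iN * (\<Sum>n\<in>W. s (wave_vec X Y Z n) r c r' c' * cis (- E n q) * cis (E n p))
           * complex_of_real (v q $ r' $ c')" for q r' c'
      unfolding T_def by (simp add: sum_distrib_left sum_distrib_right mult_ac)
    hence "Re (\<Sum>n\<in>W. T q r' c' n) = Kspec X Y Z Nx Ny Nz s p r c q r' c' * v q $ r' $ c'" for q r' c'
      unfolding Kspec_def iN_def W_def E_def by simp
    thus ?thesis by (simp add: Re_sum)
  qed
  finally show ?thesis unfolding G_def .
qed

definition slap :: "real^3 \<Rightarrow> 3 \<Rightarrow> 3 \<Rightarrow> 3 \<Rightarrow> 3 \<Rightarrow> complex" where
  "slap k r c r' c' = (if r' = r \<and> c' = c then - complex_of_real ((norm k)\<^sup>2) else 0)"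
definition sid :: "real^3 \<Rightarrow> 3 \<Rightarrow> 3 \<Rightarrow> 3 \<Rightarrow> 3 \<Rightarrow> complex" where
  "sid k r c r' c' = (if r' = r \<and> c' = c then 1 else 0)"
definition eps :: "real^3 \<Rightarrow> 3 \<Rightarrow> 3 \<Rightarrow> complex" where
  "eps k c c' = complex_of_real (if c = 1 \<and> c' = 2 then - k$3 else if c = 1 \<and> c' = 3 then k$2
     else if c = 2 \<and> c' = 1 then k$3 else if c = 2 \<and> c' = 3 then - k$1
     else if c = 3 \<and> c' = 1 then - k$2 else if c = 3 \<and> c' = 2 then k$1 else 0)"
definition scurl :: "real^3 \<Rightarrow> 3 \<Rightarrow> 3 \<Rightarrow> 3 \<Rightarrow> 3 \<Rightarrow> complex" where
  "scurl k r c r' c' = (if r' = r then \<i> * eps k c c' else 0)"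

lemma delta2: "(\<Sum>r'\<in>UNIV. \<Sum>c'\<in>UNIV. (if r' = r \<and> c' = c then x else 0) * (A::complex^3^3) $ r' $ c') = x * A $ r $ c"
proof -
  have "(\<Sum>r'\<in>UNIV. \<Sum>c'\<in>UNIV. (if r' = r \<and> c' = c then x else 0) * A $ r' $ c')
      = (\<Sum>r'\<in>UNIV. if r' = r then (\<Sum>c'\<in>UNIV. if c' = c then x * A $ r' $ c' else 0) else 0)"
  proof -
    have "\<And>r' c'. (if r' = r \<and> c' = c then x else 0) * A $ r' $ c' = (if r' = r then (if c' = c then x * A $ r' $ c' else 0) else 0)"
      by simp
    hence "(\<Sum>r'\<in>UNIV. \<Sum>c'\<in>UNIV. (if r' = r \<and> c' = c then x else 0) * A $ r' $ c')
       = (\<Sum>r'\<in>UNIV. \<Sum>c'\<in>UNIV. if r' = r then (if c' = c then x * A $ r' $ c' else 0) else 0)" by simp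
    also have "\<dots> = (\<Sum>r'\<in>UNIV. if r' = r then (\<Sum>c'\<in>UNIV. if c' = c then x * A $ r' $ c' else 0) else 0)"
      by (intro sum.cong refl) auto
    finally show ?thesis .
  qed
  also have "\<dots> = x * A $ r $ c" by (simp add: sum.delta)
  finally show ?thesis .
qed

lemma slap_ok: "lap_sym k A $ r $ c = (\<Sum>r'\<in>UNIV. \<Sum>c'\<in>UNIV. slap k r c r' c' * A $ r' $ c')"
  unfolding slap_def delta2 by (simp add: lap_sym_def)

lemma sid_ok: "A $ r $ c = (\<Sum>r'\<in>UNIV. \<Sum>c'\<in>UNIV. sid k r c r' c' * (A::complex^3^3) $ r' $ c')"
  unfolding sid_def delta2 by simp

lemma scurl_ok: "curl_sym k A $ r $ c = (\<Sum>r'\<in>UNIV. \<Sum>c'\<in>UNIV. scurl k r c r' c' * A $ r' $ c')"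
proof -
  have "(\<Sum>r'\<in>UNIV. \<Sum>c'\<in>UNIV. scurl k r c r' c' * A $ r' $ c')
      = (\<Sum>r'\<in>UNIV. if r' = r then (\<Sum>c'\<in>UNIV. \<i> * eps k c c' * A $ r' $ c') else 0)"
    unfolding scurl_def by (intro sum.cong refl) auto
  also have "\<dots> = (\<Sum>c'\<in>UNIV. \<i> * eps k c c' * A $ r $ c')" by (simp add: sum.delta)
  also have "\<dots> = curl_sym k A $ r $ c"
    using exhaust_3[of c]
    by (auto simp: curl_sym_def cross_c_def eps_def sum_3 algebra_simps)
  finally show ?thesis ..
qed

definition KL where
  "KL X Y Z Nx Ny Nz L1 L4 \<kappa>2 p r c q r' c' =
     L1 * Kspec X Y Z Nx Ny Nz slap p r c q r' c'
     - L4 / 2 * (Kspec X Y Z Nx Ny Nz scurl p r c q r' c' + Kspec X Y Z Nx Ny Nz scurl p c r q r' c')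
     - \<kappa>2 * Kspec X Y Z Nx Ny Nz sid p r c q r' c'"

lemma comb3:
  fixes a b d :: real
  shows "(\<Sum>q\<in>G. \<Sum>r'\<in>R. \<Sum>c'\<in>C. (a * K1 q r' c' - b * (K2 q r' c' + K3 q r' c') - d * K4 q r' c') * V q r' c')
   = a * (\<Sum>q\<in>G. \<Sum>r'\<in>R. \<Sum>c'\<in>C. K1 q r' c' * V q r' c')
     - b * ((\<Sum>q\<in>G. \<Sum>r'\<in>R. \<Sum>c'\<in>C. K2 q r' c' * V q r' c') + (\<Sum>q\<in>G. \<Sum>r'\<in>R. \<Sum>c'\<in>C. K3 q r' c' * V q r' c'))
     - d * (\<Sum>q\<in>G. \<Sum>r'\<in>R. \<Sum>c'\<in>C. K4 q r' c' * V q r' c')"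
  by (simp add: sum.distrib sum_subtractf sum_distrib_left algebra_simps)

lemma L_kern:
  assumes pos: "X > 0" "Y > 0" "Z > 0" "Nx > 0" "Ny > 0" "Nz > 0"
    and ev: "even Nx" "even Ny" "even Nz"
    and p: "p \<in> grid_idx Nx Ny Nz"
  shows "L_h X Y Z Nx Ny Nz L1 L4 \<kappa>2 v p $ r $ c = (\<Sum>q\<in>grid_idx Nx Ny Nz. \<Sum>r'\<in>UNIV. \<Sum>c'\<in>UNIV.
            KL X Y Z Nx Ny Nz L1 L4 \<kappa>2 p r c q r' c' * v q $ r' $ c')"
proof -
  have "L_h X Y Z Nx Ny Nz L1 L4 \<kappa>2 v p $ r $ c = L1 * lap_h X Y Z Nx Ny Nz v p $ r $ c
     - L4 / 2 * (curl_h X Y Z Nx Ny Nz v p $ r $ c + curl_h X Y Z Nx Ny Nz v p $ c $ r)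
     - \<kappa>2 * spec_op X Y Z Nx Ny Nz (\<lambda>k A. A) v p $ r $ c"
    using inversion[OF pos ev p, of v] by (simp add: L_h_def C_h_def transpose_def)
  also have "\<dots> = (\<Sum>q\<in>grid_idx Nx Ny Nz. \<Sum>r'\<in>UNIV. \<Sum>c'\<in>UNIV.
            KL X Y Z Nx Ny Nz L1 L4 \<kappa>2 p r c q r' c' * v q $ r' $ c')"
  proof -
    have i: "spec_op X Y Z Nx Ny Nz (\<lambda>k A. A) v p $ r $ c = (\<Sum>q\<in>grid_idx Nx Ny Nz. \<Sum>r'\<in>UNIV. \<Sum>c'\<in>UNIV.
            Kspec X Y Z Nx Ny Nz sid p r c q r' c' * v q $ r' $ c')"
      by (rule spec_kern) (rule sid_ok, rule p)
    show ?thesis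
      unfolding lap_h_def curl_h_def KL_def comb3 i
      by (simp only: spec_kern[OF slap_ok p] spec_kern[OF scurl_ok p])
  qed
  finally show ?thesis .
qed



definition Sv :: "(nat \<times> nat \<times> nat) set \<Rightarrow> gridfun \<Rightarrow> real" where
  "Sv G v = (\<Sum>q\<in>G. \<Sum>r\<in>UNIV. \<Sum>c\<in>UNIV. \<bar>v q $ r $ c\<bar>)"

lemma Sv_nonneg: "Sv G v \<ge> 0"
  unfolding Sv_def by (intro sum_nonneg) auto

lemma comp_le_Sv:
  assumes "finite G" "q \<in> G"
  shows "\<bar>v q $ r $ c\<bar> \<le> Sv G v"
proof -
  have "\<bar>v q $ r $ c\<bar> \<le> (\<Sum>c\<in>UNIV. \<bar>v q $ r $ c\<bar>)"
    by (rule member_le_sum) auto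
  also have "\<dots> \<le> (\<Sum>r\<in>UNIV. \<Sum>c\<in>UNIV. \<bar>v q $ r $ c\<bar>)"
    by (rule member_le_sum[where f="\<lambda>r. \<Sum>c\<in>UNIV. \<bar>v q $ r $ c\<bar>"]) (auto intro: sum_nonneg)
  also have "\<dots> \<le> Sv G v" unfolding Sv_def
    by (rule member_le_sum[where f="\<lambda>q. \<Sum>r\<in>UNIV. \<Sum>c\<in>UNIV. \<bar>v q $ r $ c\<bar>"]) (use assms in \<open>auto intro: sum_nonneg\<close>)
  finally show ?thesis .
qed

lemma norm_le_Sv:
  assumes "finite G" "q \<in> G"
  shows "norm (v q) \<le> Sv G v"
proof -
  have "norm (v q) \<le> (\<Sum>r\<in>UNIV. norm (v q $ r))"
    unfolding norm_vec_def by (rule L2_set_le_sum) auto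
  also have "\<dots> \<le> (\<Sum>r\<in>UNIV. \<Sum>c\<in>UNIV. \<bar>v q $ r $ c\<bar>)"
    by (intro sum_mono norm_le_l1_cart)
  also have "\<dots> \<le> Sv G v" unfolding Sv_def
    by (rule member_le_sum[where f="\<lambda>q. \<Sum>r\<in>UNIV. \<Sum>c\<in>UNIV. \<bar>v q $ r $ c\<bar>"]) (use assms in \<open>auto intro: sum_nonneg\<close>)
  finally show ?thesis .
qed

lemma abs_sum_le:
  fixes f g :: "'a \<Rightarrow> real"
  assumes "\<And>x. x \<in> A \<Longrightarrow> \<bar>f x\<bar> \<le> g x"
  shows "\<bar>sum f A\<bar> \<le> sum g A"
proof -
  have "\<bar>sum f A\<bar> \<le> (\<Sum>x\<in>A. \<bar>f x\<bar>)" by (rule sum_abs)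
  also have "\<dots> \<le> sum g A" using assms by (rule sum_mono)
  finally show ?thesis .
qed

definition Kt :: "(nat \<times> nat \<times> nat) set \<Rightarrow> (nat \<times> nat \<times> nat \<Rightarrow> 3 \<Rightarrow> 3 \<Rightarrow> nat \<times> nat \<times> nat \<Rightarrow> 3 \<Rightarrow> 3 \<Rightarrow> real) \<Rightarrow> real" where
  "Kt G K = (\<Sum>p\<in>G. \<Sum>r\<in>UNIV. \<Sum>c\<in>UNIV. \<Sum>q\<in>G. \<Sum>r'\<in>UNIV. \<Sum>c'\<in>UNIV. \<bar>K p r c q r' c'\<bar>)"

lemma Kt_nonneg: "Kt G K \<ge> 0"
  unfolding Kt_def by (intro sum_nonneg) auto

lemma Sv_L:
  assumes fin: "finite G"
    and K: "\<And>v p r c. p \<in> G \<Longrightarrow> Lop v p $ r $ c = (\<Sum>q\<in>G. \<Sum>r'\<in>UNIV. \<Sum>c'\<in>UNIV. K p r c q r' c' * v q $ r' $ c')"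
  shows "Sv G (Lop v) \<le> Kt G K * Sv G v"
proof -
  have "Sv G (Lop v) \<le> (\<Sum>p\<in>G. \<Sum>r\<in>UNIV. \<Sum>c\<in>UNIV. \<Sum>q\<in>G. \<Sum>r'\<in>UNIV. \<Sum>c'\<in>UNIV. \<bar>K p r c q r' c'\<bar> * Sv G v)"
    unfolding Sv_def[of G "Lop v"]
  proof (intro sum_mono)
    fix p r c assume p: "p \<in> G"
    show "\<bar>Lop v p $ r $ c\<bar> \<le> (\<Sum>q\<in>G. \<Sum>r'\<in>UNIV. \<Sum>c'\<in>UNIV. \<bar>K p r c q r' c'\<bar> * Sv G v)"
      unfolding K[OF p]
    proof (intro abs_sum_le)
      fix q r' c' assume q: "q \<in> G"
      show "\<bar>K p r c q r' c' * v q $ r' $ c'\<bar> \<le> \<bar>K p r c q r' c'\<bar> * Sv G v"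
        unfolding abs_mult by (intro mult_left_mono comp_le_Sv fin q) auto
    qed
  qed
  also have "\<dots> = Kt G K * Sv G v"
    unfolding Kt_def by (simp add: sum_distrib_right)
  finally show ?thesis .
qed

lemma Sv_pow:
  assumes fin: "finite G"
    and K: "\<And>v p r c. p \<in> G \<Longrightarrow> Lop v p $ r $ c = (\<Sum>q\<in>G. \<Sum>r'\<in>UNIV. \<Sum>c'\<in>UNIV. K p r c q r' c' * v q $ r' $ c')"
  shows "Sv G ((Lop ^^ n) Q) \<le> Kt G K ^ n * Sv G Q"
proof (induction n)
  case 0 thus ?case by simp
next
  case (Suc n)
  have "Sv G ((Lop ^^ Suc n) Q) \<le> Kt G K * Sv G ((Lop ^^ n) Q)"
    using Sv_L[OF fin K] by simp
  also have "\<dots> \<le> Kt G K * (Kt G K ^ n * Sv G Q)"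
    by (intro mult_left_mono Suc Kt_nonneg)
  finally show ?case by (simp add: mult.assoc)
qed

lemma coef_bound:
  fixes Lop :: "gridfun \<Rightarrow> gridfun"
  assumes fin: "finite G"
    and K: "\<And>v p r c. p \<in> G \<Longrightarrow> Lop v p $ r $ c = (\<Sum>q\<in>G. \<Sum>r'\<in>UNIV. \<Sum>c'\<in>UNIV. K p r c q r' c' * v q $ r' $ c')"
    and q: "q \<in> G"
  shows "\<bar>(Lop ^^ n) Q q $ r $ c\<bar> \<le> Kt G K ^ n * Sv G Q"
    and "norm ((Lop ^^ n) Q q) \<le> Kt G K ^ n * Sv G Q"
  using comp_le_Sv[OF fin q] norm_le_Sv[OF fin q] Sv_pow[OF fin K] by (meson order_trans)+

lemma summ_comp:
  fixes Lop :: "gridfun \<Rightarrow> gridfun"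
  assumes fin: "finite G"
    and K: "\<And>v p r c. p \<in> G \<Longrightarrow> Lop v p $ r $ c = (\<Sum>q\<in>G. \<Sum>r'\<in>UNIV. \<Sum>c'\<in>UNIV. K p r c q r' c' * v q $ r' $ c')"
    and q: "q \<in> G"
  shows "summable (\<lambda>n. ((Lop ^^ n) Q q $ r $ c / fact n) * y ^ n)"
proof -
  have g: "summable (\<lambda>n. Sv G Q * (inverse (fact n) * (Kt G K * \<bar>y\<bar>) ^ n))"
    by (intro summable_mult summable_exp)
  have b: "norm (((Lop ^^ n) Q q $ r $ c / fact n) * y ^ n) \<le> Sv G Q * (inverse (fact n) * (Kt G K * \<bar>y\<bar>) ^ n)" for n
  proof -
  have "norm (((Lop ^^ n) Q q $ r $ c / fact n) * y ^ n) = \<bar>(Lop ^^ n) Q q $ r $ c\<bar> * (inverse (fact n) * \<bar>y\<bar> ^ n)"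
    by (simp add: abs_mult power_abs divide_inverse)
  also have "\<dots> \<le> (Kt G K ^ n * Sv G Q) * (inverse (fact n) * \<bar>y\<bar> ^ n)"
    by (intro mult_right_mono coef_bound(1)[OF fin K q]) auto
  also have "\<dots> = Sv G Q * (inverse (fact n) * (Kt G K * \<bar>y\<bar>) ^ n)"
    by (simp add: power_mult_distrib)
  finally show ?thesis .
  qed
  show ?thesis by (rule summable_comparison_test[OF _ g]) (use b in auto)
qed

lemma summ_vec:
  fixes Lop :: "gridfun \<Rightarrow> gridfun"
  assumes fin: "finite G"
    and K: "\<And>v p r c. p \<in> G \<Longrightarrow> Lop v p $ r $ c = (\<Sum>q\<in>G. \<Sum>r'\<in>UNIV. \<Sum>c'\<in>UNIV. K p r c q r' c' * v q $ r' $ c')"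
    and q: "q \<in> G"
  shows "summable (\<lambda>n. (t ^ n / fact n) *\<^sub>R (Lop ^^ n) Q q)"
proof -
  have g: "summable (\<lambda>n. Sv G Q * (inverse (fact n) * (Kt G K * \<bar>t\<bar>) ^ n))"
    by (intro summable_mult summable_exp)
  have b: "norm ((t ^ n / fact n) *\<^sub>R (Lop ^^ n) Q q) \<le> Sv G Q * (inverse (fact n) * (Kt G K * \<bar>t\<bar>) ^ n)" for n
  proof -
  have "norm ((t ^ n / fact n) *\<^sub>R (Lop ^^ n) Q q) = norm ((Lop ^^ n) Q q) * (inverse (fact n) * \<bar>t\<bar> ^ n)"
    by (simp add: abs_mult power_abs divide_inverse)
  also have "\<dots> \<le> (Kt G K ^ n * Sv G Q) * (inverse (fact n) * \<bar>t\<bar> ^ n)"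
    by (intro mult_right_mono coef_bound(2)[OF fin K q]) auto
  also have "\<dots> = Sv G Q * (inverse (fact n) * (Kt G K * \<bar>t\<bar>) ^ n)"
    by (simp add: power_mult_distrib)
  finally show ?thesis .
  qed
  show ?thesis by (rule summable_comparison_test[OF _ g]) (use b in auto)
qed

definition ee :: "(gridfun \<Rightarrow> gridfun) \<Rightarrow> gridfun \<Rightarrow> nat \<times> nat \<times> nat \<Rightarrow> 3 \<Rightarrow> 3 \<Rightarrow> real \<Rightarrow> real" where
  "ee Lop Q q r c t = (\<Sum>n. ((Lop ^^ n) Q q $ r $ c / fact n) * t ^ n)"

lemma opexp_comp:
  fixes Lop :: "gridfun \<Rightarrow> gridfun"
  assumes fin: "finite G"
    and K: "\<And>v p r c. p \<in> G \<Longrightarrow> Lop v p $ r $ c = (\<Sum>q\<in>G. \<Sum>r'\<in>UNIV. \<Sum>c'\<in>UNIV. K p r c q r' c' * v q $ r' $ c')"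
    and q: "q \<in> G"
  shows "op_exp Lop t Q q $ r $ c = ee Lop Q q r c t"
proof -
  have bl: "bounded_linear (\<lambda>x::real^3^3. x $ r $ c)"
    using bounded_linear_compose[OF bounded_linear_vec_nth[of c] bounded_linear_vec_nth[of r]] by (simp add: o_def)
  have "op_exp Lop t Q q $ r $ c = (\<Sum>n. ((t ^ n / fact n) *\<^sub>R (Lop ^^ n) Q q) $ r $ c)"
    unfolding op_exp_def using bounded_linear.suminf[OF bl summ_vec[OF fin K q]] by simp
  also have "\<dots> = ee Lop Q q r c t"
    unfolding ee_def by (simp add: mult.commute)
  finally show ?thesis .
qed

lemma deriv_ee:
  fixes Lop :: "gridfun \<Rightarrow> gridfun"
  assumes fin: "finite G"
    and K: "\<And>v p r c. p \<in> G \<Longrightarrow> Lop v p $ r $ c = (\<Sum>q\<in>G. \<Sum>r'\<in>UNIV. \<Sum>c'\<in>UNIV. K p r c q r' c' * v q $ r' $ c')"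
    and q: "q \<in> G"
  shows "DERIV (ee Lop Q q r c) t :> Lop (op_exp Lop t Q) q $ r $ c"
proof -
  define cc where "cc = (\<lambda>n. (Lop ^^ n) Q q $ r $ c / fact n)"
  have e: "ee Lop Q q r c = (\<lambda>t. \<Sum>n. cc n * t ^ n)"
    unfolding ee_def cc_def by (rule ext) simp
  have d: "DERIV (\<lambda>t. \<Sum>n. cc n * t ^ n) t :> (\<Sum>n. diffs cc n * t ^ n)"
    by (rule termdiffs_strong_converges_everywhere) (unfold cc_def, rule summ_comp[OF fin K q])
  have dc: "diffs cc n = Lop ((Lop ^^ n) Q) q $ r $ c / fact n" for n
    unfolding diffs_def cc_def by (simp add: fact_Suc del: of_nat_Suc)
  define f where "f = (\<lambda>n q' r' c'. K q r c q' r' c' * ((Lop ^^ n) Q q' $ r' $ c' / fact n * t ^ n))"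
  have sm: "summable (\<lambda>n. f n q' r' c')" if "q' \<in> G" for q' r' c'
    unfolding f_def by (intro summable_mult summ_comp[OF fin K that])
  have "(\<Sum>n. diffs cc n * t ^ n) = (\<Sum>n. \<Sum>q'\<in>G. \<Sum>r'\<in>UNIV. \<Sum>c'\<in>UNIV. f n q' r' c')"
    unfolding dc K[OF q] f_def by (simp add: sum_distrib_left sum_distrib_right mult.assoc sum_divide_distrib)
  also have "\<dots> = (\<Sum>q'\<in>G. \<Sum>r'\<in>UNIV. \<Sum>c'\<in>UNIV. \<Sum>n. f n q' r' c')"
    using sm by (simp add: suminf_sum summable_sum)
  also have "\<dots> = (\<Sum>q'\<in>G. \<Sum>r'\<in>UNIV. \<Sum>c'\<in>UNIV. K q r c q' r' c' * ee Lop Q q' r' c' t)"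
    unfolding f_def ee_def
    by (intro sum.cong refl suminf_mult summ_comp[OF fin K]) 
  also have "\<dots> = Lop (op_exp Lop t Q) q $ r $ c"
    unfolding K[OF q] using opexp_comp[OF fin K] by simp
  finally show ?thesis using d e by simp
qed

lemma contraction_generic:
  fixes Lop :: "gridfun \<Rightarrow> gridfun"
  assumes fin: "finite G"
    and K: "\<And>v p r c. p \<in> G \<Longrightarrow> Lop v p $ r $ c = (\<Sum>q\<in>G. \<Sum>r'\<in>UNIV. \<Sum>c'\<in>UNIV. K p r c q r' c' * v q $ r' $ c')"
    and N: "\<And>v. (\<Sum>p\<in>G. frob (Lop v p) (v p)) \<le> 0"
    and t: "t \<ge> 0"
  shows "(\<Sum>p\<in>G. frob (op_exp Lop t Q p) (op_exp Lop t Q p)) \<le> (\<Sum>p\<in>G. frob (Q p) (Q p))"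
proof -
  define F where "F = (\<lambda>s. \<Sum>q\<in>G. \<Sum>r\<in>UNIV. \<Sum>c\<in>UNIV. (ee Lop Q q r c s)\<^sup>2)"
  have Fe: "(\<Sum>p\<in>G. frob (op_exp Lop s Q p) (op_exp Lop s Q p)) = F s" for s
    unfolding F_def frob_def by (intro sum.cong refl) (simp add: opexp_comp[OF fin K] power2_eq_square)
  have ee0: "ee Lop Q q r c 0 = Q q $ r $ c" for q r c
  proof -
    have "ee Lop Q q r c 0 = (\<Sum>n. ((Lop ^^ n) Q q $ r $ c / fact n) * 0 ^ n)" by (simp add: ee_def)
    also have "\<dots> = Q q $ r $ c" by (subst powser_zero) simp
    finally show ?thesis .
  qed
  have F0: "F 0 = (\<Sum>p\<in>G. frob (Q p) (Q p))"
    unfolding F_def frob_def ee0 by (simp add: power2_eq_square)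
  have "F t \<le> F 0"
  proof (rule DERIV_nonpos_imp_nonincreasing[OF t])
    fix s :: real
    define D where "D = (\<Sum>q\<in>G. \<Sum>r\<in>UNIV. \<Sum>c\<in>UNIV. of_nat 2 * (Lop (op_exp Lop s Q) q $ r $ c * (ee Lop Q q r c s) ^ (2 - Suc 0)))"
    have "DERIV F s :> D"
      unfolding F_def D_def
      by (intro DERIV_sum DERIV_power deriv_ee[OF fin K])
    moreover have "D \<le> 0"
    proof -
      have "D = 2 * (\<Sum>q\<in>G. frob (Lop (op_exp Lop s Q) q) (op_exp Lop s Q q))"
        unfolding D_def frob_def by (simp add: sum_distrib_left opexp_comp[OF fin K])
      thus ?thesis using N[of "op_exp Lop s Q"] by simp
    qed
    ultimately show "\<exists>y. DERIV F s :> y \<and> y \<le> 0" by blast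
  qed
  thus ?thesis unfolding Fe F0 .
qed



theorem lemma4p1:
  fixes X Y Z L1 L4 \<kappa>2 :: real and Nx Ny Nz :: nat
  assumes "X > 0" "Y > 0" "Z > 0"
    and "Nx > 0" "Ny > 0" "Nz > 0" "even Nx" "even Ny" "even Nz"
    and "L1 > 0" "\<kappa>2 \<ge> L4\<^sup>2 / (2 * L1)"
  shows "(\<forall>Q\<in>Mh Nx Ny Nz. inner_h X Y Z Nx Ny Nz (L_h X Y Z Nx Ny Nz L1 L4 \<kappa>2 Q) Q \<le> 0)
       \<and> (\<forall>t\<ge>0. \<forall>Q\<in>Mh Nx Ny Nz.
            norm_h X Y Z Nx Ny Nz (op_exp (L_h X Y Z Nx Ny Nz L1 L4 \<kappa>2) t Q) \<le> norm_h X Y Z Nx Ny Nz Q)"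
proof -
  have pos: "X > 0" "Y > 0" "Z > 0" "Nx > 0" "Ny > 0" "Nz > 0" using assms by auto
  have ev: "even Nx" "even Ny" "even Nz" using assms by auto
  have L: "L1 > 0" "\<kappa>2 \<ge> L4\<^sup>2 / (2 * L1)" using assms by auto
  define h where "h = (2 * X / real Nx) * (2 * Y / real Ny) * (2 * Z / real Nz)"
  have h0: "h \<ge> 0" unfolding h_def using pos by simp
  have ih: "inner_h X Y Z Nx Ny Nz M N = h * (\<Sum>p\<in>grid_idx Nx Ny Nz. frob (M p) (N p))" for M N
    unfolding inner_h_def h_def ..
  have fin: "finite (grid_idx Nx Ny Nz)" unfolding grid_idx_def by simp
  have N: "\<And>v. (\<Sum>p\<in>grid_idx Nx Ny Nz. frob (L_h X Y Z Nx Ny Nz L1 L4 \<kappa>2 v p) (v p)) \<le> 0"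
    by (rule quad_nonpos[OF pos ev L])
  have part1: "inner_h X Y Z Nx Ny Nz (L_h X Y Z Nx Ny Nz L1 L4 \<kappa>2 Q) Q \<le> 0" for Q
    unfolding ih using h0 N[of Q] by (simp add: mult_nonneg_nonpos)
  have part2: "norm_h X Y Z Nx Ny Nz (op_exp (L_h X Y Z Nx Ny Nz L1 L4 \<kappa>2) t Q) \<le> norm_h X Y Z Nx Ny Nz Q"
    if t: "t \<ge> 0" for t Q
  proof -
    have "(\<Sum>p\<in>grid_idx Nx Ny Nz. frob (op_exp (L_h X Y Z Nx Ny Nz L1 L4 \<kappa>2) t Q p) (op_exp (L_h X Y Z Nx Ny Nz L1 L4 \<kappa>2) t Q p))
        \<le> (\<Sum>p\<in>grid_idx Nx Ny Nz. frob (Q p) (Q p))"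
      by (rule contraction_generic[OF fin L_kern[OF pos ev] N t])
    hence "h * (\<Sum>p\<in>grid_idx Nx Ny Nz. frob (op_exp (L_h X Y Z Nx Ny Nz L1 L4 \<kappa>2) t Q p) (op_exp (L_h X Y Z Nx Ny Nz L1 L4 \<kappa>2) t Q p))
        \<le> h * (\<Sum>p\<in>grid_idx Nx Ny Nz. frob (Q p) (Q p))"
      by (rule mult_left_mono[OF _ h0])
    thus ?thesis unfolding norm_h_def ih by (rule real_sqrt_le_mono)
  qed
  show ?thesis using part1 part2 by blast
qed

end
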